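(* For any $k \ge 2$, \[ O(k, 2k-2) = \frac{C_{k-1} + C_{(k-2)/2}}{2}, \] where $C_n = \frac{1}{n+1}\binom{2n}{n}$ for integers $n\ge 0$ and $C_n = 0$ if $n$ is not an integer. Moreover, $O(k, 2k-3) = 2E(k, 2k-2)$.
   Context: For a binary word $w = w_1\cdots w_n$, let $A = \{i : w_i = 0\}$, $|A|=a$; $G(w)$ is the permutation of $[n]$ whose first $a$ entries are the elements of $A$ in increasing order followed by the elements of $[n]\setminus A$ in increasing order. $w$ is called odd (resp. even) if $G(w)$ has an odd (resp. even) number of inversions. For $k\ge1$, $m\ge0$, $\mathcal{B}(k,m)$ is the set of binary words of length $m$ that avoid (do not contain as a not-necessarily-contiguous subsequence) every word $0^j1^{k-j}$, $j\in\{0,\dots,k\}$; $O(k,m)$ and $E(k,m)$ are the numbers of odd and even words in $\mathcal{B}(k,m)$ respectively. *)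

theory Defs
  imports Complex_Main "HOL-Library.Sublist"
begin

text \<open>Binary words are lists over nat with letters in {0,1}; positions are 1-based.\<close>

definition binword :: "nat list \<Rightarrow> bool" where
  "binword w \<longleftrightarrow> set w \<subseteq> {0, 1}"

definition G :: "nat list \<Rightarrow> nat list" where
  "G w = filter (\<lambda>i. w ! (i - 1) = 0) [1..<length w + 1]
       @ filter (\<lambda>i. w ! (i - 1) \<noteq> 0) [1..<length w + 1]"

definition inversions :: "nat list \<Rightarrow> nat" where
  "inversions p = card {(i, j). i < j \<and> j < length p \<and> p ! i > p ! j}"

definition odd_word :: "nat list \<Rightarrow> bool" where
  "odd_word w \<longleftrightarrow> odd (inversions (G w))"

definition even_word :: "nat list \<Rightarrow> bool" where
  "even_word w \<longleftrightarrow> even (inversions (G w))"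

definition B :: "nat \<Rightarrow> nat \<Rightarrow> nat list set" where
  "B k m = {w. length w = m \<and> binword w \<and>
              (\<forall>j\<in>{0..k}. \<not> subseq (replicate j 0 @ replicate (k - j) 1) w)}"

definition Ocount :: "nat \<Rightarrow> nat \<Rightarrow> nat" where
  "Ocount k m = card {w \<in> B k m. odd_word w}"

definition Ecount :: "nat \<Rightarrow> nat \<Rightarrow> nat" where
  "Ecount k m = card {w \<in> B k m. even_word w}"

definition Cat :: "real \<Rightarrow> real" where
  "Cat x = (if x \<in> \<nat> then (let n = nat \<lfloor>x\<rfloor> in real ((2 * n) choose n) / real (n + 1)) else 0)"

end

theory Submission
  imports Defs
begin


fun walk :: "nat \<Rightarrow> nat list \<Rightarrow> nat option" where
  "walk h [] = Some h"
| "walk h (x#xs) = (if x = 0 then (if h = 0 then None else walk (h-1) xs) else walk (Suc h) xs)"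

lemma walk_append: "walk h (xs@ys) = (case walk h xs of None \<Rightarrow> None | Some h' \<Rightarrow> walk h' ys)"
  by (induction xs arbitrary: h) auto

definition zc :: "nat list \<Rightarrow> nat" where "zc w = length (filter (\<lambda>x. x = 0) w)"
definition oc :: "nat list \<Rightarrow> nat" where "oc w = length (filter (\<lambda>x. x \<noteq> 0) w)"

lemma zc_simps[simp]: "zc [] = 0" "zc (x#xs) = (if x = 0 then Suc (zc xs) else zc xs)"
  "zc (xs@ys) = zc xs + zc ys"
  by (auto simp: zc_def)
lemma oc_simps[simp]: "oc [] = 0" "oc (x#xs) = (if x = 0 then oc xs else Suc (oc xs))"
  "oc (xs@ys) = oc xs + oc ys"
  by (auto simp: oc_def)
lemma zc_oc_len: "zc w + oc w = length w"
  by (induction w) auto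

lemma all_splits_Cons:
  "(\<forall>u v. x#xs = u@v \<longrightarrow> P u) \<longleftrightarrow> P [] \<and> (\<forall>u v. xs = u@v \<longrightarrow> P (x#u))"
  by (auto simp: Cons_eq_append_conv)

lemma walk_char:
  "walk h w = Some h' \<longleftrightarrow> (\<forall>u v. w = u@v \<longrightarrow> zc u \<le> h + oc u) \<and> h' + zc w = h + oc w"
proof (induction w arbitrary: h)
  case Nil
  then show ?case by auto
next
  case (Cons x xs)
  show ?case
  proof (cases "x = 0")
    case True
    show ?thesis
    proof (cases h)
      case 0
      have "\<not> (\<forall>u v. xs = u @ v \<longrightarrow> zc (0 # u) \<le> h + oc (0 # u))"
      proof
        assume a: "\<forall>u v. xs = u @ v \<longrightarrow> zc (0 # u) \<le> h + oc (0 # u)"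
        have "zc [0] \<le> h + oc [0]" using a[rule_format, of "[]" xs] by simp
        then show False using 0 by simp
      qed
      then show ?thesis using True 0 by (simp only: all_splits_Cons) simp
    next
      case (Suc h1)
      then show ?thesis using True Cons[of h1] by (simp only: all_splits_Cons) auto
    qed
  next
    case False
    then show ?thesis
      apply (simp only: all_splits_Cons)
      using Cons[of "Suc h"] by auto
  qed
qed

lemma filter_zero_rep: "filter (\<lambda>x. x = 0) u = replicate (zc u) (0::nat)"
  unfolding zc_def by (rule replicate_length_same[symmetric]) auto

lemma filter_one_rep: "binword u \<Longrightarrow> filter (\<lambda>x. x \<noteq> 0) u = replicate (oc u) (1::nat)"
  unfolding oc_def binword_def by (rule replicate_length_same[symmetric]) auto

lemma subseq_rep_le: "j \<le> n \<Longrightarrow> subseq (replicate j a) (replicate n a)"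
proof -
  assume "j \<le> n"
  then have "replicate n a = replicate j a @ replicate (n-j) a"
    by (metis le_add_diff_inverse replicate_add)
  then show ?thesis by (metis prefix_imp_subseq prefixI)
qed

lemma subseq_zeros: "j \<le> zc u \<Longrightarrow> subseq (replicate j 0) u"
  by (metis filter_zero_rep subseq_filter_left subseq_order.order_trans subseq_rep_le)

lemma subseq_ones: "binword u \<Longrightarrow> j \<le> oc u \<Longrightarrow> subseq (replicate j 1) u"
  by (metis filter_one_rep subseq_filter_left subseq_order.order_trans subseq_rep_le)

lemma subseq_zeros_le: "subseq (replicate j (0::nat)) u \<Longrightarrow> j \<le> zc u"
proof -
  assume "subseq (replicate j (0::nat)) u"
  then have "subseq (filter (\<lambda>x. x = 0) (replicate j (0::nat))) (filter (\<lambda>x. x = 0) u)"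
    by (rule subseq_filter)
  then have "length (filter (\<lambda>x. x = 0) (replicate j (0::nat))) \<le> zc u"
    unfolding zc_def by (rule list_emb_length)
  then show ?thesis by simp
qed

lemma subseq_ones_le: "subseq (replicate j (1::nat)) u \<Longrightarrow> j \<le> oc u"
proof -
  assume "subseq (replicate j (1::nat)) u"
  then have "subseq (filter (\<lambda>x. x \<noteq> 0) (replicate j (1::nat))) (filter (\<lambda>x. x \<noteq> 0) u)"
    by (rule subseq_filter)
  then have "length (filter (\<lambda>x. x \<noteq> 0) (replicate j (1::nat))) \<le> oc u"
    unfolding oc_def by (rule list_emb_length)
  then show ?thesis by simp
qed

lemma binword_append[simp]: "binword (xs@ys) \<longleftrightarrow> binword xs \<and> binword ys"
  by (auto simp: binword_def)

lemma binword_Cons[simp]: "binword (x#xs) \<longleftrightarrow> (x = 0 \<or> x = 1) \<and> binword xs"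
  by (auto simp: binword_def)

lemma binword_Nil[simp]: "binword []"
  by (auto simp: binword_def)

lemma B_char: "w \<in> B k m \<longleftrightarrow> length w = m \<and> binword w \<and> (\<forall>u v. w = u@v \<longrightarrow> zc u + oc v < k)"
proof
  assume w: "w \<in> B k m"
  have "zc u + oc v < k" if "w = u@v" for u v
  proof (rule ccontr)
    assume "\<not> zc u + oc v < k"
    define j where "j = min k (zc u)"
    have bw: "binword v" using w that by (auto simp: B_def)
    have "subseq (replicate j 0 @ replicate (k-j) 1) (u@v)"
      apply (rule list_emb_append_mono)
       apply (rule subseq_zeros) apply (simp add: j_def)
      apply (rule subseq_ones[OF bw]) using \<open>\<not> zc u + oc v < k\<close> by (simp add: j_def)
    moreover have "j \<in> {0..k}" by (simp add: j_def)
    ultimately show False using w that by (auto simp: B_def)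
  qed
  then show "length w = m \<and> binword w \<and> (\<forall>u v. w = u@v \<longrightarrow> zc u + oc v < k)"
    using w by (auto simp: B_def)
next
  assume h: "length w = m \<and> binword w \<and> (\<forall>u v. w = u@v \<longrightarrow> zc u + oc v < k)"
  have "\<not> subseq (replicate j 0 @ replicate (k - j) 1) w" if "j \<in> {0..k}" for j
  proof
    assume "subseq (replicate j 0 @ replicate (k - j) 1) w"
    then obtain u v where "w = u@v" "subseq (replicate j 0) u" "subseq (replicate (k-j) 1) v"
      using list_emb_appendD by blast
    then have "j \<le> zc u" "k - j \<le> oc v" "zc u + oc v < k"
      using subseq_zeros_le subseq_ones_le h by blast+
    then show False using that by auto
  qed
  then show "w \<in> B k m" using h by (auto simp: B_def)
qed

fun il :: "nat list \<Rightarrow> nat" where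
  "il [] = 0"
| "il (x#xs) = length (filter (\<lambda>y. y < x) xs) + il xs"

lemma inversions_il: "inversions p = il p"
proof (induction p)
  case Nil
  then show ?case by (simp add: inversions_def)
next
  case (Cons x xs)
  define S where "S = {(i, j). i < j \<and> j < length xs \<and> xs ! i > xs ! j}"
  define S1 where "S1 = (\<lambda>j. (0::nat, Suc j)) ` {j. j < length xs \<and> xs!j < x}"
  define S2 where "S2 = (\<lambda>(i,j). (Suc i, Suc j)) ` S"
  have eq: "{(i, j). i < j \<and> j < length (x#xs) \<and> (x#xs) ! i > (x#xs) ! j} = S1 \<union> S2"
  proof (intro equalityI subsetI)
    fix p assume "p \<in> {(i, j). i < j \<and> j < length (x#xs) \<and> (x#xs) ! i > (x#xs) ! j}"
    then obtain i j where p: "p = (i,j)" "i < j" "j < Suc (length xs)" "(x#xs) ! i > (x#xs) ! j" by auto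
    then obtain j' where j': "j = Suc j'" by (cases j) auto
    show "p \<in> S1 \<union> S2"
    proof (cases i)
      case 0
      then show ?thesis using p j' unfolding S1_def by auto
    next
      case (Suc i')
      then have "(i', j') \<in> S" using p j' unfolding S_def by auto
      then show ?thesis using p j' Suc unfolding S2_def by force
    qed
  next
    fix p assume "p \<in> S1 \<union> S2"
    then show "p \<in> {(i, j). i < j \<and> j < length (x#xs) \<and> (x#xs) ! i > (x#xs) ! j}"
      unfolding S1_def S2_def S_def by auto
  qed
  have fin: "finite S" unfolding S_def
    by (rule finite_subset[of _ "{..<length xs} \<times> {..<length xs}"]) auto
  have "card S1 = card {j. j < length xs \<and> xs!j < x}"
    unfolding S1_def by (rule card_image) (auto simp: inj_on_def)
  also have "\<dots> = length (filter (\<lambda>y. y < x) xs)"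
    by (simp add: length_filter_conv_card)
  finally have c1: "card S1 = length (filter (\<lambda>y. y < x) xs)" .
  have "card S2 = card S"
    unfolding S2_def by (rule card_image) (auto simp: inj_on_def)
  then have c2: "card S2 = il xs" using Cons S_def by (simp add: inversions_def)
  have "card (S1 \<union> S2) = card S1 + card S2"
    by (rule card_Un_disjoint) (auto simp: S1_def S2_def fin)
  then show ?case unfolding inversions_def using eq c1 c2 by simp
qed

lemma il_snoc_big: "\<forall>y\<in>set xs. y < m \<Longrightarrow> il (xs@[m]) = il xs"
  by (induction xs) auto

lemma il_mid_big: "\<forall>y\<in>set (zs@os). y < m \<Longrightarrow> il (zs@m#os) = il (zs@os) + length os"
proof (induction zs)
  case Nil
  have "filter (\<lambda>y. y < m) os = os" using Nil by (auto simp: filter_id_conv)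
  then show ?case by simp
next
  case (Cons z zs)
  then show ?case by auto
qed

definition ZG :: "nat list \<Rightarrow> nat list" where
  "ZG w = filter (\<lambda>i. w ! (i - 1) = 0) [1..<length w + 1]"
definition OG :: "nat list \<Rightarrow> nat list" where
  "OG w = filter (\<lambda>i. w ! (i - 1) \<noteq> 0) [1..<length w + 1]"

lemma G_ZG_OG: "G w = ZG w @ OG w" by (simp add: G_def ZG_def OG_def)

lemma ZG_snoc: "ZG (w@[x]) = ZG w @ (if x = 0 then [Suc (length w)] else [])"
proof -
  have "filter (\<lambda>i. (w@[x]) ! (i - 1) = 0) [1..<length w + 1] = ZG w"
    unfolding ZG_def by (rule filter_cong) (auto simp: nth_append)
  then show ?thesis unfolding ZG_def by simp
qed

lemma OG_snoc: "OG (w@[x]) = OG w @ (if x \<noteq> 0 then [Suc (length w)] else [])"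
proof -
  have "filter (\<lambda>i. (w@[x]) ! (i - 1) \<noteq> 0) [1..<length w + 1] = OG w"
    unfolding OG_def by (rule filter_cong) (auto simp: nth_append)
  then show ?thesis unfolding OG_def by simp
qed

lemma set_ZG: "set (ZG w) \<subseteq> {1..length w}" unfolding ZG_def by auto
lemma set_OG: "set (OG w) \<subseteq> {1..length w}" unfolding OG_def by auto

lemma length_OG: "length (OG w) = oc w"
  apply (induction w rule: rev_induct)
   apply (simp add: OG_def)
  by (simp add: OG_snoc)

definition I :: "nat list \<Rightarrow> nat" where "I w = inversions (G w)"

lemma I_Nil: "I [] = 0" by (simp add: I_def G_def inversions_def)

lemma I_snoc0: "I (w@[0]) = I w + oc w"
proof -
  have "\<forall>y\<in>set (ZG w @ OG w). y < Suc (length w)" using set_ZG[of w] set_OG[of w] by auto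
  then show ?thesis
    by (simp add: I_def G_ZG_OG ZG_snoc OG_snoc inversions_il il_mid_big length_OG)
qed

lemma I_snoc1: "x \<noteq> 0 \<Longrightarrow> I (w@[x]) = I w"
proof -
  assume x: "x \<noteq> 0"
  have "\<forall>y\<in>set (ZG w @ OG w). y < Suc (length w)" using set_ZG[of w] set_OG[of w] by auto
  then show ?thesis using x
    using il_snoc_big[of "ZG w @ OG w" "Suc (length w)"]
    by (simp add: I_def G_ZG_OG ZG_snoc OG_snoc inversions_il)
qed

lemma I_append: "I (xs@ys) = I xs + I ys + oc xs * zc ys"
proof (induction ys rule: rev_induct)
  case Nil
  then show ?case by (simp add: I_Nil)
next
  case (snoc y ys)
  show ?case
  proof (cases "y = 0")
    case True
    then show ?thesis using snoc I_snoc0[of "xs@ys"] I_snoc0[of ys]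
      by (simp add: algebra_simps del: append_assoc) (simp add: algebra_simps)
  next
    case False
    then show ?thesis using snoc I_snoc1[of y "xs@ys"] I_snoc1[of y ys]
      by (simp del: append_assoc) simp
  qed
qed

lemma I_single: "I [x] = 0"
  using I_snoc0[of "[]"] I_snoc1[of x "[]"] by (cases "x = 0") (auto simp: I_Nil)

lemma I_Cons: "I (x#w) = I w + (if x = 0 then 0 else zc w)"
  using I_append[of "[x]" w] by (simp add: I_single)

definition W :: "nat \<Rightarrow> nat \<Rightarrow> nat list set" where
  "W L h = {w. length w = L \<and> binword w \<and> walk 0 w = Some h}"

lemma finite_W: "finite (W L h)"
proof -
  have "W L h \<subseteq> {w. set w \<subseteq> {0,1} \<and> length w = L}" by (auto simp: W_def binword_def)
  moreover have "finite {w. set w \<subseteq> {0::nat,1} \<and> length w = L}"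
    by (rule finite_lists_length_eq) simp
  ultimately show ?thesis by (rule finite_subset)
qed

lemma walk_shift: "walk h w = Some h' \<Longrightarrow> walk (h+d) w = Some (h'+d)"
proof (induction w arbitrary: h)
  case (Cons x w)
  show ?case
  proof (cases "x = 0")
    case True
    then have hp: "h > 0" "walk (h-1) w = Some h'" using Cons.prems by (auto split: if_splits)
    then have "walk (h-1+d) w = Some (h'+d)" using Cons.IH by blast
    moreover have "h + d - 1 = h - 1 + d" using hp by simp
    ultimately show ?thesis using True hp by simp
  next
    case False
    then have "walk (Suc h) w = Some h'" using Cons.prems by simp
    then have "walk (Suc h + d) w = Some (h'+d)" using Cons.IH by blast
    then show ?thesis using False by simp
  qed
qed simp

lemma first_return:
  "walk (Suc h) w = Some h' \<Longrightarrow> h' \<le> h \<Longrightarrow>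
   \<exists>u v. w = u @ 0 # v \<and> walk 0 u = Some 0 \<and> walk h v = Some h'"
proof (induction "length w" arbitrary: w h rule: less_induct)
  case less
  then obtain x xs where w: "w = x # xs" by (cases w) auto
  show ?case
  proof (cases "x = 0")
    case True
    then show ?thesis using less.prems w by (intro exI[of _ "[]"] exI[of _ xs]) auto
  next
    case False
    then have "walk (Suc (Suc h)) xs = Some h'" using less.prems w by simp
    then obtain u1 v1 where 1: "xs = u1 @ 0 # v1" "walk 0 u1 = Some 0" "walk (Suc h) v1 = Some h'"
      using less.hyps[of xs "Suc h"] less.prems w by auto
    then obtain u2 v2 where 2: "v1 = u2 @ 0 # v2" "walk 0 u2 = Some 0" "walk h v2 = Some h'"
      using less.hyps[of v1 h] less.prems w by auto
    have "walk 0 (x # u1 @ 0 # u2) = Some 0"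
      using False 1 2 walk_shift[of 0 u1 0 1] by (simp add: walk_append)
    then show ?thesis using w 1 2 False
      by (intro exI[of _ "x # u1 @ 0 # u2"] exI[of _ v2]) auto
  qed
qed

lemma W_counts: "w \<in> W L h \<Longrightarrow> zc w + h = oc w"
  unfolding W_def using walk_char[of 0 w h] by auto

lemma W_len: "w \<in> W (2*a) 0 \<Longrightarrow> zc w = a \<and> oc w = a"
  using W_counts[of w "2*a" 0] zc_oc_len[of w] by (auto simp: W_def)

lemma dyck_prefix_unique:
  assumes "walk 0 u = Some 0" "walk 0 u' = Some 0" "u @ 0 # v = u' @ 0 # v'"
  shows "u = u' \<and> v = v'"
proof -
  have aux: False if "walk 0 (p @ 0 # q) = Some 0" "walk 0 p = Some 0" for p q
    using that by (simp add: walk_append)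
  from assms(3) obtain us where "u = u' @ us \<and> us @ 0 # v = 0 # v' \<or> u @ us = u' \<and> 0 # v = us @ 0 # v'"
    by (auto simp: append_eq_append_conv2)
  then show ?thesis
  proof
    assume h: "u = u' @ us \<and> us @ 0 # v = 0 # v'"
    show ?thesis
    proof (cases us)
      case Nil then show ?thesis using h by auto
    next
      case (Cons y ys)
      then have "u = u' @ 0 # ys" using h by auto
      then show ?thesis using aux assms by blast
    qed
  next
    assume h: "u @ us = u' \<and> 0 # v = us @ 0 # v'"
    show ?thesis
    proof (cases us)
      case Nil then show ?thesis using h by auto
    next
      case (Cons y ys)
      then have "u' = u @ 0 # ys" using h by auto
      then show ?thesis using aux assms by blast
    qed
  qed
qed

definition phi :: "nat \<times> nat list \<times> nat list \<Rightarrow> nat list" where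
  "phi t = (case t of (a, u, v) \<Rightarrow> 1 # u @ 0 # v)"

lemma phi_bij: "bij_betw phi (SIGMA a:{..n}. W (2*a) 0 \<times> W (2*(n-a)) 0) (W (2 * Suc n) 0)"
proof (rule bij_betwI')
  fix x y assume x: "x \<in> (SIGMA a:{..n}. W (2*a) 0 \<times> W (2*(n-a)) 0)"
    and y: "y \<in> (SIGMA a:{..n}. W (2*a) 0 \<times> W (2*(n-a)) 0)"
  obtain a u v where xx0: "x = (a,u,v)" by (cases x) auto
  then have xx: "x = (a,u,v)" "u \<in> W (2*a) 0" using x by auto
  obtain a' u' v' where yy0: "y = (a',u',v')" by (cases y) auto
  then have yy: "y = (a',u',v')" "u' \<in> W (2*a') 0" using y by auto
  show "(phi x = phi y) = (x = y)"
  proof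
    assume "phi x = phi y"
    then have "u @ 0 # v = u' @ 0 # v'" using xx yy by (simp add: phi_def)
    then have "u = u' \<and> v = v'" using dyck_prefix_unique xx yy by (auto simp: W_def)
    moreover then have "a = a'" using xx yy by (auto simp: W_def)
    ultimately show "x = y" using xx yy by simp
  qed simp
next
  fix x assume x: "x \<in> (SIGMA a:{..n}. W (2*a) 0 \<times> W (2*(n-a)) 0)"
  then obtain a u v where xx: "x = (a,u,v)" "a \<le> n" "u \<in> W (2*a) 0" "v \<in> W (2*(n-a)) 0"
    by auto
  have "walk 1 u = Some 1" using walk_shift[of 0 u 0 1] xx by (auto simp: W_def)
  then have "walk 0 (1 # u @ 0 # v) = Some 0" using xx by (simp add: walk_append W_def)
  then show "phi x \<in> W (2 * Suc n) 0" using xx by (auto simp: phi_def W_def)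
next
  fix w assume w: "w \<in> W (2 * Suc n) 0"
  then obtain x xs where wx: "w = x # xs" by (cases w) (auto simp: W_def)
  have x1: "x = 1" using w wx by (auto simp: W_def binword_def split: if_splits)
  then have "walk (Suc 0) xs = Some 0" using w wx by (auto simp: W_def)
  then obtain u v where uv: "xs = u @ 0 # v" "walk 0 u = Some 0" "walk 0 v = Some 0"
    using first_return[of 0 xs 0] by auto
  define a where "a = length u div 2"
  have "zc u = oc u" using uv walk_char[of 0 u 0] by auto
  then have la: "length u = 2 * a" using zc_oc_len[of u] a_def by presburger
  have lw: "length w = 2 * Suc n" using w by (auto simp: W_def)
  then have an: "a \<le> n" using wx uv la by simp
  have lv: "length v = 2 * (n - a)" using lw wx uv la by simp
  have "binword u" "binword v" using w wx uv by (auto simp: W_def)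
  then have "(a, u, v) \<in> (SIGMA a:{..n}. W (2*a) 0 \<times> W (2*(n-a)) 0)"
    using an la lv uv by (auto simp: W_def)
  moreover have "w = phi (a, u, v)" using wx x1 uv by (simp add: phi_def)
  ultimately show "\<exists>x\<in>(SIGMA a:{..n}. W (2*a) 0 \<times> W (2*(n-a)) 0). w = phi x" by blast
qed

lemma dyck_sum:
  "(\<Sum>w\<in>W (2 * Suc n) 0. f w) = (\<Sum>a\<le>n. \<Sum>u\<in>W (2*a) 0. \<Sum>v\<in>W (2*(n-a)) 0. f (1 # u @ 0 # v))"
proof -
  have "(\<Sum>w\<in>W (2 * Suc n) 0. f w) = (\<Sum>x\<in>(SIGMA a:{..n}. W (2*a) 0 \<times> W (2*(n-a)) 0). f (phi x))"
    using sum.reindex_bij_betw[OF phi_bij, of f] by simp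
  also have "\<dots> = (\<Sum>a\<le>n. \<Sum>p\<in>W (2*a) 0 \<times> W (2*(n-a)) 0. f (phi (a, p)))"
    by (subst sum.Sigma) (auto simp: finite_W)
  also have "\<dots> = (\<Sum>a\<le>n. \<Sum>u\<in>W (2*a) 0. \<Sum>v\<in>W (2*(n-a)) 0. f (1 # u @ 0 # v))"
    by (rule sum.cong[OF refl], subst sum.cartesian_product) (simp add: phi_def case_prod_beta)
  finally show ?thesis .
qed

lemma W_Suc: "W (Suc L) h = (if h > 0 then (\<lambda>w. w @ [1]) ` W L (h-1) else {}) \<union> (\<lambda>w. w @ [0]) ` W L (Suc h)"
proof (intro equalityI subsetI)
  fix w assume w: "w \<in> W (Suc L) h"
  then have "length w = Suc L" by (simp add: W_def)
  then obtain w' x where wx: "w = w' @ [x]" unfolding length_Suc_conv_rev by blast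
  have bx: "x = 0 \<or> x = 1" "binword w'" using w wx by (auto simp: W_def binword_def)
  have lw: "length w' = L" using w wx by (auto simp: W_def)
  obtain h1 where h1: "walk 0 w' = Some h1" "walk h1 [x] = Some h"
    using w wx by (auto simp: W_def walk_append split: option.splits)
  show "w \<in> (if h > 0 then (\<lambda>w. w @ [1]) ` W L (h-1) else {}) \<union> (\<lambda>w. w @ [0]) ` W L (Suc h)"
  proof (cases "x = 0")
    case True
    then have "h1 = Suc h" using h1 by (auto split: if_splits)
    then show ?thesis using True wx bx lw h1 by (auto simp: W_def)
  next
    case False
    then have "x = 1" "h = Suc h1" using h1 bx by auto
    then show ?thesis using wx bx lw h1 by (auto simp: W_def)
  qed
next
  fix w assume "w \<in> (if h > 0 then (\<lambda>w. w @ [1]) ` W L (h-1) else {}) \<union> (\<lambda>w. w @ [0]) ` W L (Suc h)"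
  then show "w \<in> W (Suc L) h"
    by (auto simp: W_def walk_append binword_def split: if_splits)
qed

lemma card_W_Suc: "card (W (Suc L) h) = (if h > 0 then card (W L (h-1)) else 0) + card (W L (Suc h))"
proof -
  have inj: "inj_on (\<lambda>w. w @ [y]) A" for y :: nat and A by (auto simp: inj_on_def)
  have disj: "(if h > 0 then (\<lambda>w. w @ [1::nat]) ` W L (h-1) else {}) \<inter> (\<lambda>w. w @ [0]) ` W L (Suc h) = {}"
    by auto
  have "card (W (Suc L) h) = card (if h > 0 then (\<lambda>w. w @ [1::nat]) ` W L (h-1) else {}) + card ((\<lambda>w. w @ [0]) ` W L (Suc h))"
    unfolding W_Suc by (rule card_Un_disjoint) (simp_all add: finite_W disj)
  then show ?thesis by (simp add: card_image[OF inj])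
qed

lemma W_empty: "L < h \<Longrightarrow> W L h = {}"
proof (rule ccontr)
  assume "L < h" "W L h \<noteq> {}"
  then obtain w where w: "w \<in> W L h" by auto
  then have "zc w + h = oc w" "length w = L" by (auto simp: W_counts W_def)
  then show False using zc_oc_len[of w] \<open>L < h\<close> by simp
qed

lemma card_W_formula:
  "card (W (h + 2*j) h) + (if j = 0 then 0 else (h + 2*j) choose (j - 1)) = (h + 2*j) choose j"
proof (induction "h + 2*j" arbitrary: h j)
  case 0
  then have "h = 0" "j = 0" by auto
  moreover have "W 0 0 = {[]}" by (auto simp: W_def binword_def)
  ultimately show ?case by simp
next
  case (Suc M)
  have hj: "h + 2*j = Suc M" using Suc.hyps(2) by simp
  show ?case
  proof (cases j)
    case 0
    then have h: "h = Suc M" using hj by simp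
    have "card (W M (h-1)) = 1" using Suc.hyps(1)[of "h-1" 0] h by simp
    moreover have "W M (Suc h) = {}" using h by (intro W_empty) simp
    ultimately have "card (W (Suc M) h) = 1" using card_W_Suc[of M h] h by simp
    then show ?thesis using 0 hj by simp
  next
    case (Suc j1)
    note j = this
    have M: "M = h + 2*j1 + 1" using hj j by simp
    have IH2: "card (W M (Suc h)) + (if j1 = 0 then 0 else M choose (j1 - 1)) = M choose j1"
    proof -
      have e: "Suc h + 2*j1 = M" using M by simp
      show ?thesis using Suc.hyps(1)[of "Suc h" j1, OF e[symmetric], unfolded e] .
    qed
    have P1: "Suc M choose Suc j1 = (M choose j1) + (M choose Suc j1)" by (rule binomial_Suc_Suc)
    have P2: "Suc M choose j1 = (if j1 = 0 then 0 else M choose (j1 - 1)) + (M choose j1)"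
      by (cases j1) (simp_all only: binomial_Suc_Suc, simp_all)
    have main: "card (W (Suc M) h) + (Suc M choose j1) = Suc M choose Suc j1"
    proof (cases h)
      case 0
      have sym: "M choose Suc j1 = M choose j1"
        using binomial_symmetric[of j1 M] M 0 by (simp del: binomial_Suc_Suc)
      have "card (W (Suc M) h) = card (W M (Suc h))" using card_W_Suc[of M h] 0 by simp
      then show ?thesis using IH2 P1 P2 sym by linarith
    next
      case (Suc h1)
      have IH1: "card (W M h1) + (M choose j1) = M choose Suc j1"
      proof -
        have e: "h1 + 2*Suc j1 = M" using M \<open>h = Suc h1\<close> by simp
        show ?thesis using Suc.hyps(1)[of h1 "Suc j1", OF e[symmetric], unfolded e]
          by (simp only: if_False nat.distinct diff_Suc_1)
      qed
      have "card (W (Suc M) h) = card (W M h1) + card (W M (Suc h))"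
        using card_W_Suc[of M h] \<open>h = Suc h1\<close> by simp
      then show ?thesis using IH1 IH2 P1 P2 by linarith
    qed
    have jnz: "j \<noteq> 0" and jm1: "j - 1 = j1" using j by simp_all
    show ?thesis unfolding hj jm1 if_not_P[OF jnz] using main unfolding j .
  qed
qed



lemma sum_split_even: "(\<Sum>a\<le>2*m. f a) = (\<Sum>i<m. f (2*i+1)) + (\<Sum>i\<le>m. f (2*i::nat))"
proof (induction m)
  case 0 then show ?case by simp
next
  case (Suc m)
  have "(\<Sum>a\<le>2*Suc m. f a) = (\<Sum>a\<le>2*m. f a) + f (2*m+1) + f (2*m+2)"
    by (simp add: atMost_Suc add_ac)
  then show ?case using Suc by (simp add: atMost_Suc lessThan_Suc algebra_simps)
qed

lemma sum_split_odd: "(\<Sum>a\<le>2*m+1. f a) = (\<Sum>i\<le>m. f (2*i+1)) + (\<Sum>i\<le>m. f (2*i::nat))"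
proof -
  have "(\<Sum>a\<le>2*m+1. f a) = (\<Sum>a\<le>2*m. f a) + f (2*m+1)" using sum.atMost_Suc[of f "2*m"] by simp
  also have "\<dots> = (\<Sum>i<m. f (2*i+1)) + (\<Sum>i\<le>m. f (2*i)) + f (2*m+1)" by (simp only: sum_split_even)
  also have "(\<Sum>i\<le>m. f (2*i+1)) = (\<Sum>i<m. f (2*i+1)) + f (2*m+1)"
    by (simp only: lessThan_Suc_atMost[symmetric] sum.lessThan_Suc)
  ultimately show ?thesis by (simp add: add_ac)
qed

definition sv :: "(nat \<Rightarrow> nat) \<Rightarrow> nat \<Rightarrow> int" where
  "sv c j = (if j = 0 then 1 else if even j then 0 else - int (c ((j - 1) div 2)))"

lemma sv_odd: "sv c (2*i+1) = - int (c i)" by (simp add: sv_def)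
lemma sv_odd_Suc[simp]: "sv c (Suc (2*i)) = - int (c i)" by (simp add: sv_def)
lemma sv_even: "i > 0 \<Longrightarrow> sv c (2*i) = 0" by (simp add: sv_def)

lemma T_eval:
  assumes c0: "c 0 = 1" and crec: "\<And>n. c (Suc n) = (\<Sum>a\<le>n. c a * c (n - a))"
  shows "(\<Sum>a\<le>n. (-1::int)^((a+1)*(n-a)) * sv c a * sv c (n-a)) = - sv c (Suc n)"
proof -
  define t where "t a = (-1::int)^((a+1)*(n-a)) * sv c a * sv c (n-a)" for a
  have "(\<Sum>a\<le>n. t a) = - sv c (Suc n)"
  proof (cases "even n")
    case True
    then obtain m where n: "n = 2*m" by auto
    have odd_part: "t (2*i+1) = int (c i) * int (c (m - 1 - i))" if "i < m" for i
    proof -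
      have e1: "n - (2*i+1) = 2*(m-1-i) + 1" using that n by simp
      have e2: "(2*i+1+1)*(n-(2*i+1)) = 2*((i+1)*(n - (2*i+1)))" by simp
      show ?thesis unfolding t_def e2 power_mult using e1 by (simp add: sv_odd)
    qed
    have even_part: "t (2*i) = (if m = 0 then 1 else 0)" if "i \<le> m" for i
    proof (cases "m = 0")
      case True then show ?thesis using that n by (simp add: t_def sv_def)
    next
      case False
      have "sv c (2*i) = 0 \<or> sv c (n - 2*i) = 0"
      proof (cases "i = 0")
        case True then show ?thesis using n False sv_even[of m c] by simp
      next
        case False then show ?thesis using sv_even[of i c] by simp
      qed
      then show ?thesis using False by (auto simp: t_def)
    qed
    have "(\<Sum>a\<le>n. t a) = (\<Sum>i<m. t (2*i+1)) + (\<Sum>i\<le>m. t (2*i))"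
      unfolding n by (rule sum_split_even)
    also have "\<dots> = (\<Sum>i<m. int (c i) * int (c (m - 1 - i))) + (\<Sum>i\<le>m. (if m = 0 then 1 else 0))"
      using odd_part even_part by simp
    also have "\<dots> = int (c m)"
    proof (cases m)
      case 0 then show ?thesis using c0 by simp
    next
      case (Suc m1)
      have "(\<Sum>i<m. int (c i) * int (c (m - 1 - i))) = (\<Sum>i\<le>m1. int (c i * c (m1 - i)))"
        using Suc lessThan_Suc_atMost by simp
      also have "\<dots> = int (c m)" using crec[of m1] Suc by (simp only: of_nat_sum[symmetric])
      finally show ?thesis using Suc by simp
    qed
    also have "\<dots> = - sv c (Suc n)" using n sv_odd[of c m] by simp
    finally show ?thesis .
  next
    case False
    then obtain m where n: "n = 2*m+1" using oddE by blast
    have p1: "t (2*i+1) = (if i = m then sv c (2*m+1) else 0)" if "i \<le> m" for i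
    proof (cases "i = m")
      case True then show ?thesis using n by (simp add: t_def sv_def)
    next
      case False
      then have "n - (2*i+1) = 2*(m-i)" "m - i > 0" using n that by auto
      then show ?thesis using False sv_even[of "m-i" c] by (simp add: t_def)
    qed
    have p2: "t (2*i) = (if i = 0 then - sv c (2*m+1) else 0)" if "i \<le> m" for i
    proof (cases "i = 0")
      case True then show ?thesis using n by (simp add: t_def sv_def)
    next
      case False
      then show ?thesis using sv_even[of i c] by (simp add: t_def)
    qed
    have "(\<Sum>a\<le>n. t a) = (\<Sum>i\<le>m. t (2*i+1)) + (\<Sum>i\<le>m. t (2*i))"
      unfolding n by (rule sum_split_odd)
    also have "\<dots> = (\<Sum>i\<le>m. (if i = m then sv c (2*m+1) else 0)) + (\<Sum>i\<le>m. (if i = 0 then - sv c (2*m+1) else 0))"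
      using p1 p2 by simp
    also have "\<dots> = 0" by simp
    also have "\<dots> = - sv c (Suc n)" using n by (simp add: sv_def)
    finally show ?thesis .
  qed
  then show ?thesis by (simp add: t_def)
qed





definition cc :: "nat \<Rightarrow> nat" where "cc n = card (W (2*n) 0)"
definition sg :: "nat list \<Rightarrow> int" where "sg w = (-1)^(I w)"
definition ss :: "nat \<Rightarrow> int" where "ss n = (\<Sum>w\<in>W (2*n) 0. sg w)"

lemma W00: "W 0 0 = {[]}" by (auto simp: W_def)

lemma cc0: "cc 0 = 1" by (simp add: cc_def W00)
lemma ss0: "ss 0 = 1" by (simp add: ss_def W00 sg_def I_Nil)

lemma cc_rec: "cc (Suc n) = (\<Sum>a\<le>n. cc a * cc (n - a))"
proof -
  have "cc (Suc n) = (\<Sum>w\<in>W (2 * Suc n) 0. 1)" by (simp add: cc_def)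
  also have "\<dots> = (\<Sum>a\<le>n. \<Sum>u\<in>W (2*a) 0. \<Sum>v\<in>W (2*(n-a)) 0. 1)" by (rule dyck_sum)
  also have "\<dots> = (\<Sum>a\<le>n. cc a * cc (n - a))" by (simp add: cc_def)
  finally show ?thesis .
qed

lemma I_decomp:
  assumes "u \<in> W (2*a) 0" "v \<in> W (2*b) 0"
  shows "I (1 # u @ 0 # v) = I u + I v + (a+1)*b + 2*a + 1"
proof -
  have "zc u = a" "oc u = a" "zc v = b" using W_len assms by blast+
  then show ?thesis
    using I_Cons[of 1 "u @ 0 # v"] I_append[of u "0 # v"] I_Cons[of 0 v]
    by (simp add: algebra_simps)
qed

lemma sg_decomp:
  assumes "u \<in> W (2*a) 0" "v \<in> W (2*b) 0"
  shows "sg (1 # u @ 0 # v) = - ((-1)^((a+1)*b) * sg u * sg v)"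
  unfolding sg_def I_decomp[OF assms] by (simp add: power_add power_mult)

lemma sum_prod_aux:
  fixes k :: int
  shows "(\<Sum>u\<in>AA. \<Sum>v\<in>BB. - (k * f u * g v)) = - (k * sum f AA * sum g BB)"
proof -
  have "(\<Sum>u\<in>AA. \<Sum>v\<in>BB. - (k * f u * g v)) = (\<Sum>u\<in>AA. - (k * f u * sum g BB))"
    by (intro sum.cong refl) (simp add: sum_negf sum_distrib_left)
  also have "\<dots> = - (\<Sum>u\<in>AA. k * f u * sum g BB)" by (rule sum_negf)
  also have "(\<Sum>u\<in>AA. k * f u * sum g BB) = (\<Sum>u\<in>AA. f u) * (k * sum g BB)"
    by (subst sum_distrib_right) (simp add: algebra_simps)
  finally show ?thesis by (simp add: algebra_simps)
qed

lemma ss_rec: "ss (Suc n) = - (\<Sum>a\<le>n. (-1::int)^((a+1)*(n-a)) * ss a * ss (n - a))"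
proof -
  have "ss (Suc n) = (\<Sum>a\<le>n. \<Sum>u\<in>W (2*a) 0. \<Sum>v\<in>W (2*(n-a)) 0. sg (1 # u @ 0 # v))"
    unfolding ss_def by (rule dyck_sum)
  also have "\<dots> = (\<Sum>a\<le>n. \<Sum>u\<in>W (2*a) 0. \<Sum>v\<in>W (2*(n-a)) 0. - ((-1)^((a+1)*(n-a)) * sg u * sg v))"
    by (intro sum.cong refl) (rule sg_decomp; assumption)
  also have "\<dots> = (\<Sum>a\<le>n. - ((-1::int)^((a+1)*(n-a)) * ss a * ss (n - a)))"
    unfolding ss_def by (intro sum.cong refl) (rule sum_prod_aux)
  finally show ?thesis by (simp add: sum_negf)
qed

lemma ss_sv: "ss j = sv cc j"
proof (induction j rule: less_induct)
  case (less j)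
  show ?case
  proof (cases j)
    case 0 then show ?thesis by (simp add: ss0 sv_def)
  next
    case (Suc n)
    have "ss j = - (\<Sum>a\<le>n. (-1::int)^((a+1)*(n-a)) * sv cc a * sv cc (n - a))"
      unfolding Suc ss_rec using less Suc by (intro arg_cong[where f=uminus] sum.cong refl) auto
    also have "\<dots> = sv cc (Suc n)" using T_eval[of cc n, OF cc0 cc_rec] by simp
    finally show ?thesis using Suc by simp
  qed
qed

lemma cc_formula: "real (cc n) = real ((2*n) choose n) / real (n+1)"
proof (cases n)
  case 0 then show ?thesis by (simp add: cc0)
next
  case (Suc n1)
  have f: "cc n + (2*n choose (n-1)) = 2*n choose n"
    using card_W_formula[of 0 n] Suc by (simp add: cc_def)
  have pos: "0 < n" using Suc by simp
  have a: "n * ((2*n) choose n) = (2*n) * ((2*n - 1) choose (n - 1))"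
    by (rule times_binomial_minus1_eq[of n "2*n", OF pos])
  have b: "(n+1) * ((2*n) choose (n+1)) = (2*n) * ((2*n - 1) choose n)"
    using times_binomial_minus1_eq[of "n+1" "2*n", OF zero_less_Suc[of n, unfolded Suc_eq_plus1]]
    by (simp only: add_diff_cancel_right')
  have s1: "(2*n) choose (n+1) = (2*n) choose (n-1)"
    using binomial_symmetric[of "n+1" "2*n"] Suc by simp
  have s2: "(2*n - 1) choose n = (2*n - 1) choose (n-1)"
    using binomial_symmetric[of "n" "2*n-1"] Suc by simp
  have "(n+1) * ((2*n) choose (n-1)) = (n+1) * ((2*n) choose (n+1))" by (simp only: s1)
  also have "\<dots> = (2*n) * ((2*n - 1) choose n)" by (rule b)
  also have "\<dots> = (2*n) * ((2*n - 1) choose (n-1))" by (simp only: s2)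
  also have "\<dots> = n * ((2*n) choose n)" by (rule a[symmetric])
  finally have "(n+1) * ((2*n) choose (n-1)) = n * ((2*n) choose n)" .
  then have "real (n+1) * real ((2*n) choose (n-1)) = real n * real ((2*n) choose n)"
    by (metis of_nat_mult)
  moreover have "real (cc n) = real ((2*n) choose n) - real ((2*n) choose (n-1))"
    using f by (metis add_diff_cancel_right' of_nat_add)
  ultimately have "real (n+1) * real (cc n) = real ((2*n) choose n)"
  proof -
    assume E1: "real (n+1) * real ((2*n) choose (n-1)) = real n * real ((2*n) choose n)"
       and E2: "real (cc n) = real ((2*n) choose n) - real ((2*n) choose (n-1))"
    have "real (n+1) * real (cc n) = real (n+1) * real ((2*n) choose n) - real (n+1) * real ((2*n) choose (n-1))"
      using E2 by (simp add: right_diff_distrib)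
    also have "\<dots> = real ((2*n) choose n)" using E1 by (simp add: algebra_simps)
    finally show ?thesis .
  qed
  then show ?thesis by (simp add: field_simps)
qed

definition Bs :: "nat \<Rightarrow> nat list set" where
  "Bs L = {w. length w = L \<and> binword w \<and> walk 1 w = Some 0}"

lemma finite_Bs: "finite (Bs L)"
proof -
  have "Bs L \<subseteq> {w. set w \<subseteq> {0,1} \<and> length w = L}" by (auto simp: Bs_def binword_def)
  moreover have "finite {w. set w \<subseteq> {0::nat,1} \<and> length w = L}"
    by (rule finite_lists_length_eq) simp
  ultimately show ?thesis by (rule finite_subset)
qed

lemma B_even: "B (Suc n) (2*n) = W (2*n) 0"
proof (intro equalityI subsetI)
  fix w assume "w \<in> B (Suc n) (2*n)"
  then have h: "length w = 2*n" "binword w" "\<And>u v. w = u@v \<Longrightarrow> zc u + oc v < Suc n"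
    unfolding B_char by auto
  have "oc w \<le> n" using h(3)[of "[]" w] by simp
  moreover have "zc w \<le> n" using h(3)[of w "[]"] by simp
  moreover have "zc w + oc w = 2*n" using zc_oc_len[of w] h(1) by simp
  ultimately have e: "zc w = n" "oc w = n" by auto
  have "zc u \<le> oc u" if "w = u@v" for u v
    using h(3)[OF that] e that by simp
  then have "walk 0 w = Some 0" using walk_char[of 0 w 0] e by auto
  then show "w \<in> W (2*n) 0" using h by (simp add: W_def)
next
  fix w assume w: "w \<in> W (2*n) 0"
  then have e: "zc w = n" "oc w = n" using W_len by auto
  have wc: "zc u \<le> oc u" if "w = u@v" for u v
    using w walk_char[of 0 w 0] that by (auto simp: W_def)
  have "zc u + oc v < Suc n" if "w = u@v" for u v
    using wc[OF that] e that by simp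
  then show "w \<in> B (Suc n) (2*n)" using w unfolding B_char by (auto simp: W_def)
qed

lemma B_odd: "n > 0 \<Longrightarrow> B (Suc n) (2*n-1) = W (2*n-1) 1 \<union> Bs (2*n-1)"
proof (intro equalityI subsetI)
  fix w assume n: "n > 0" and "w \<in> B (Suc n) (2*n-1)"
  then have h: "length w = 2*n-1" "binword w" "\<And>u v. w = u@v \<Longrightarrow> zc u + oc v < Suc n"
    unfolding B_char by auto
  have o: "oc w \<le> n" using h(3)[of "[]" w] by simp
  have z: "zc w \<le> n" using h(3)[of w "[]"] by simp
  have l: "zc w + oc w = 2*n-1" using zc_oc_len[of w] h(1) by simp
  show "w \<in> W (2*n-1) 1 \<union> Bs (2*n-1)"
  proof (cases "oc w = n")
    case True
    have "zc u \<le> oc u" if "w = u@v" for u v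
      using h(3)[OF that] True that by simp
    moreover have "1 + zc w = 0 + oc w" using True l n by simp
    ultimately have "walk 0 w = Some 1" using walk_char[of 0 w 1] by auto
    then show ?thesis using h by (simp add: W_def)
  next
    case False
    then have e: "oc w = n - 1" "zc w = n" using o z l n by auto
    have "zc u \<le> 1 + oc u" if "w = u@v" for u v
      using h(3)[OF that] e that n by simp
    moreover have "0 + zc w = 1 + oc w" using e n by simp
    ultimately have "walk 1 w = Some 0" using walk_char[of 1 w 0] by auto
    then show ?thesis using h by (simp add: Bs_def)
  qed
next
  fix w assume n: "n > 0" and w: "w \<in> W (2*n-1) 1 \<union> Bs (2*n-1)"
  then have lb: "length w = 2*n-1" "binword w" by (auto simp: W_def Bs_def)
  have l: "zc w + oc w = 2*n-1" using zc_oc_len[of w] lb by simp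
  have "zc u + oc v < Suc n" if "w = u@v" for u v
  proof (cases "w \<in> W (2*n-1) 1")
    case True
    then have "walk 0 w = Some 1" by (simp add: W_def)
    then have "zc u \<le> oc u" "1 + zc w = oc w" using walk_char[of 0 w 1] that by auto
    then show ?thesis using l n that by simp
  next
    case False
    then have "walk 1 w = Some 0" using w by (simp add: Bs_def)
    then have "zc u \<le> 1 + oc u" "zc w = 1 + oc w" using walk_char[of 1 w 0] that by auto
    then show ?thesis using l n that by simp
  qed
  then show "w \<in> B (Suc n) (2*n-1)" using lb unfolding B_char by auto
qed

lemma W_even_snoc: "n > 0 \<Longrightarrow> W (2*n) 0 = (\<lambda>w. w @ [0]) ` W (2*n-1) 1"
  using W_Suc[of "2*n-1" 0] by simp

lemma W_even_cons: "W (2*n) 0 = (\<lambda>w. 1 # w) ` Bs (2*n-1)" if npos: "n > 0"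
proof (intro equalityI subsetI)
  fix w assume w: "w \<in> W (2*n) 0"
  then obtain x xs where wx: "w = x # xs" using npos by (cases w) (auto simp: W_def)
  have x1: "x = 1" using w wx by (auto simp: W_def split: if_splits)
  then have "walk 1 xs = Some 0" using w wx by (auto simp: W_def)
  then have "xs \<in> Bs (2*n-1)" using w wx by (auto simp: W_def Bs_def)
  then show "w \<in> (\<lambda>w. 1 # w) ` Bs (2*n-1)" using wx x1 by auto
next
  fix w assume "w \<in> (\<lambda>w. 1 # w) ` Bs (2*n-1)"
  then show "w \<in> W (2*n) 0" using npos by (auto simp: W_def Bs_def)
qed

lemma A_len: "w \<in> W (2*n-1) 1 \<Longrightarrow> n > 0 \<Longrightarrow> oc w = n"
  using W_counts[of w "2*n-1" 1] zc_oc_len[of w] by (auto simp: W_def)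

lemma Bs_len: "w \<in> Bs (2*n-1) \<Longrightarrow> n > 0 \<Longrightarrow> zc w = n"
  using walk_char[of 1 w 0] zc_oc_len[of w] by (auto simp: Bs_def)

lemma sum_A: "n > 0 \<Longrightarrow> ss n = (-1)^n * (\<Sum>w\<in>W (2*n-1) 1. sg w)"
proof -
  assume n: "n > 0"
  have "ss n = (\<Sum>w\<in>W (2*n-1) 1. sg (w @ [0]))"
    unfolding ss_def W_even_snoc[OF n] by (subst sum.reindex) (auto simp: inj_on_def)
  also have "\<dots> = (\<Sum>w\<in>W (2*n-1) 1. (-1)^n * sg w)"
    by (intro sum.cong refl) (simp add: sg_def I_snoc0 A_len[OF _ n] power_add)
  finally show ?thesis by (simp add: sum_distrib_left)
qed

lemma sum_Bs: "n > 0 \<Longrightarrow> ss n = (-1)^n * (\<Sum>w\<in>Bs (2*n-1). sg w)"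
proof -
  assume n: "n > 0"
  have "ss n = (\<Sum>w\<in>Bs (2*n-1). sg (1 # w))"
    unfolding ss_def W_even_cons[OF n] by (subst sum.reindex) (auto simp: inj_on_def)
  also have "\<dots> = (\<Sum>w\<in>Bs (2*n-1). (-1)^n * sg w)"
    by (intro sum.cong refl) (simp add: sg_def I_Cons Bs_len[OF _ n] power_add)
  finally show ?thesis by (simp add: sum_distrib_left)
qed

lemma card_A: "n > 0 \<Longrightarrow> card (W (2*n-1) 1) = cc n"
  unfolding cc_def by (subst W_even_snoc) (auto intro!: card_image[symmetric] simp: inj_on_def)

lemma card_Bs: "n > 0 \<Longrightarrow> card (Bs (2*n-1)) = cc n"
  unfolding cc_def by (subst W_even_cons) (auto intro!: card_image[symmetric] simp: inj_on_def)

lemma OE_split: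
  assumes "finite S"
  shows "int (card {w\<in>S. even_word w}) - int (card {w\<in>S. odd_word w}) = (\<Sum>w\<in>S. sg w)"
    and "card {w\<in>S. even_word w} + card {w\<in>S. odd_word w} = card S"
proof -
  have sg_if: "sg w = (if even_word w then 1 else -1)" for w
    by (simp add: sg_def even_word_def I_def)
  have ev: "S \<inter> {x. even_word x} = {w\<in>S. even_word w}" by auto
  have od: "S \<inter> - {x. even_word x} = {w\<in>S. odd_word w}" by (auto simp: even_word_def odd_word_def)
  show "int (card {w\<in>S. even_word w}) - int (card {w\<in>S. odd_word w}) = (\<Sum>w\<in>S. sg w)"
    unfolding sg_if using assms by (simp add: sum.If_cases ev od)
  have "S = {w\<in>S. even_word w} \<union> {w\<in>S. odd_word w}" by (auto simp: even_word_def odd_word_def)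
  moreover have "card ({w\<in>S. even_word w} \<union> {w\<in>S. odd_word w}) = card {w\<in>S. even_word w} + card {w\<in>S. odd_word w}"
    by (rule card_Un_disjoint) (auto simp: assms even_word_def odd_word_def)
  ultimately show "card {w\<in>S. even_word w} + card {w\<in>S. odd_word w} = card S" by simp
qed

lemma Cat_nat: "Cat (real m) = real (cc m)"
  by (simp add: Cat_def cc_formula)

lemma Cat_not_nat: "x \<notin> \<nat> \<Longrightarrow> Cat x = 0"
  by (simp add: Cat_def)

lemma half_not_nat: "even n \<Longrightarrow> (real n - 1) / 2 \<notin> \<nat>"
proof
  assume e: "even n" and "(real n - 1) / 2 \<in> \<nat>"
  then obtain j where "(real n - 1) / 2 = real j" by (auto elim: Nats_cases)
  then have "real n = real (2*j+1)" by simp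
  then have "n = 2*j+1" by (simp only: of_nat_eq_iff)
  then show False using e by simp
qed

theorem proposition4p2:
  fixes k :: nat
  assumes "k \<ge> 2"
  shows "real (Ocount k (2 * k - 2)) = (Cat (real k - 1) + Cat ((real k - 2) / 2)) / 2
         \<and> Ocount k (2 * k - 3) = 2 * Ecount k (2 * k - 2)"
proof -
  define n where "n = k - 1"
  have n: "n > 0" "k = Suc n" using assms by (auto simp: n_def)
  have m2: "2 * k - 2 = 2 * n" and m3: "2 * k - 3 = 2 * n - 1" using n by auto
  define O2 where "O2 = Ocount k (2*n)"
  define E2 where "E2 = Ecount k (2*n)"
  define O3 where "O3 = Ocount k (2*n-1)"
  define E3 where "E3 = Ecount k (2*n-1)"
  have d2: "int E2 - int O2 = ss n" "E2 + O2 = cc n"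
    using OE_split[OF finite_W, of "2*n" 0]
    by (simp_all add: E2_def O2_def Ecount_def Ocount_def n(2) B_even ss_def cc_def)
  have sv: "ss n = sv cc n" by (rule ss_sv)
  have Cat1: "Cat (real k - 1) = real (cc n)" using n Cat_nat[of n] by simp
  have part1: "real O2 = (Cat (real k - 1) + Cat ((real k - 2) / 2)) / 2"
  proof (cases "even n")
    case True
    have "(real k - 2) / 2 = (real n - 1) / 2" using n by simp
    then have "Cat ((real k - 2) / 2) = 0" using Cat_not_nat[OF half_not_nat[OF True]] by (simp only:)
    moreover have "ss n = 0" using sv True n by (simp add: sv_def)
    ultimately show ?thesis using d2 Cat1 by simp
  next
    case False
    then obtain m where nm: "n = 2*m+1" using oddE by blast
    have "(real k - 2) / 2 = real m" using n nm by simp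
    then have "Cat ((real k - 2) / 2) = real (cc m)" using Cat_nat by simp
    moreover have "ss n = - int (cc m)" using sv nm by (simp add: sv_def)
    ultimately show ?thesis using d2 Cat1 by simp
  qed
  have disj: "W (2*n-1) 1 \<inter> Bs (2*n-1) = {}"
  proof (rule ccontr)
    assume "W (2*n-1) 1 \<inter> Bs (2*n-1) \<noteq> {}"
    then obtain w where w: "w \<in> W (2*n-1) 1" "w \<in> Bs (2*n-1)" by auto
    then show False using A_len[OF w(1) n(1)] Bs_len[OF w(2) n(1)] W_counts[OF w(1)] by simp
  qed
  have fin: "finite (W (2*n-1) 1 \<union> Bs (2*n-1))" by (simp add: finite_W finite_Bs)
  have sA: "(\<Sum>w\<in>W (2*n-1) 1. sg w) = (-1)^n * ss n"
    using sum_A[OF n(1)] by (simp add: power_mult_distrib[symmetric])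
  have sB: "(\<Sum>w\<in>Bs (2*n-1). sg w) = (-1)^n * ss n"
    using sum_Bs[OF n(1)] by (simp add: power_mult_distrib[symmetric])
  have d3a: "int E3 - int O3 = (\<Sum>w\<in>W (2*n-1) 1 \<union> Bs (2*n-1). sg w)"
    unfolding E3_def O3_def Ecount_def Ocount_def n(2) B_odd[OF n(1)] by (rule OE_split(1)[OF fin])
  also have "\<dots> = 2 * (-1)^n * ss n"
    unfolding sum.union_disjoint[OF finite_W finite_Bs disj] sA sB by simp
  finally have d3: "int E3 - int O3 = 2 * (-1)^n * ss n" .
  have c3: "E3 + O3 = 2 * cc n"
    unfolding E3_def O3_def Ecount_def Ocount_def n(2) B_odd[OF n(1)]
    using OE_split(2)[OF fin] card_Un_disjoint[OF finite_W finite_Bs disj] card_A[OF n(1)] card_Bs[OF n(1)]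
    by simp
  have key: "(-1)^n * ss n = - ss n"
  proof (cases "even n")
    case True then show ?thesis using sv n by (simp add: sv_def)
  next
    case False then show ?thesis by simp
  qed
  have "int O3 = 2 * int E2" using d2 d3 c3 key by linarith
  then have part2: "O3 = 2 * E2" by simp
  show ?thesis using part1 part2 unfolding m2 m3 O2_def E2_def O3_def by simp
qed


end
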